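(* Let $G\cong(\mathbb{C}^* )^N$ be an algebraic torus, $V,W$ finite-dimensional rational representations of $G$ with Hermitian norms, $v\in V\setminus\{0\}$, $w\in W\setminus\{0\}$, and $p_{w,v}(\sigma)=\log\frac{\|\sigma w\|^2}{\|w\|^2}-\log\frac{\|\sigma v\|^2}{\|v\|^2}$. Then there exists a sequence $\{\sigma_j\}\subset G$ with $p_{w,v}(\sigma_j)\to-\infty$ if and only if there exists an algebraic one-parameter subgroup $\lambda:\mathbb{C}^*\to G$ with $\lim_{|t|\to0}p_{w,v}(\lambda(t))=-\infty$. *)

theory Defs
  imports "HOL-Analysis.Analysis"
begin

text \<open>The algebraic torus G = (C^*)^N, with N = CARD('n), realised as the set of
  vectors in complex^'n with all coordinates nonzero, with coordinatewise product.\<close>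

definition torus :: "(complex^'n) set" where
  "torus = {\<sigma>. \<forall>k. \<sigma> $ k \<noteq> 0}"

definition tmul :: "complex^'n \<Rightarrow> complex^'n \<Rightarrow> complex^'n" where
  "tmul \<sigma> \<tau> = (\<chi> k. \<sigma> $ k * \<tau> $ k)"

definition tone :: "complex^'n" where
  "tone = (\<chi> k. 1)"

definition lmono :: "complex^'n \<Rightarrow> ('n \<Rightarrow> int) \<Rightarrow> complex" where
  "lmono \<sigma> \<alpha> = (\<Prod>k\<in>UNIV. \<sigma> $ k powi \<alpha> k)"

definition regular_on_torus :: "(complex^'n \<Rightarrow> complex) \<Rightarrow> bool" where
  "regular_on_torus f \<longleftrightarrow> (\<exists>S c. finite S \<and>
     (\<forall>\<sigma>\<in>torus. f \<sigma> = (\<Sum>\<alpha>\<in>S. c \<alpha> * lmono \<sigma> \<alpha>)))"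

definition rational_rep :: "(complex^'n \<Rightarrow> complex^'v^'v) \<Rightarrow> bool" where
  "rational_rep \<rho> \<longleftrightarrow>
     \<rho> tone = mat 1 \<and>
     (\<forall>\<sigma>\<in>torus. \<forall>\<tau>\<in>torus. \<rho> (tmul \<sigma> \<tau>) = \<rho> \<sigma> ** \<rho> \<tau>) \<and>
     (\<forall>i j. regular_on_torus (\<lambda>\<sigma>. \<rho> \<sigma> $ i $ j))"

definition herm_form :: "complex^'v^'v \<Rightarrow> complex^'v \<Rightarrow> complex^'v \<Rightarrow> complex" where
  "herm_form H x y = (\<Sum>i\<in>UNIV. \<Sum>j\<in>UNIV. cnj (x $ i) * H $ i $ j * y $ j)"

definition hermitian_pd :: "complex^'v^'v \<Rightarrow> bool" where
  "hermitian_pd H \<longleftrightarrow> (\<forall>i j. H $ i $ j = cnj (H $ j $ i)) \<and>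
     (\<forall>x. x \<noteq> 0 \<longrightarrow> Re (herm_form H x x) > 0)"

definition hnorm2 :: "complex^'v^'v \<Rightarrow> complex^'v \<Rightarrow> real" where
  "hnorm2 H x = Re (herm_form H x x)"

definition alg_1ps :: "(complex \<Rightarrow> complex^'n) \<Rightarrow> bool" where
  "alg_1ps lam \<longleftrightarrow>
     (\<forall>t. t \<noteq> 0 \<longrightarrow> lam t \<in> torus) \<and>
     (\<forall>s t. s \<noteq> 0 \<longrightarrow> t \<noteq> 0 \<longrightarrow> lam (s * t) = tmul (lam s) (lam t)) \<and>
     (\<forall>k. \<exists>S c. finite S \<and> (\<forall>t. t \<noteq> 0 \<longrightarrow> lam t $ k = (\<Sum>m\<in>S. c m * t powi m)))"

definition pwv ::
  "(complex^'n \<Rightarrow> complex^'w^'w) \<Rightarrow> complex^'w^'w \<Rightarrow> complex^'w \<Rightarrow>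
   (complex^'n \<Rightarrow> complex^'v^'v) \<Rightarrow> complex^'v^'v \<Rightarrow> complex^'v \<Rightarrow> complex^'n \<Rightarrow> real" where
  "pwv \<rho>W HW w \<rho>V HV v \<sigma> =
     ln (hnorm2 HW (\<rho>W \<sigma> *v w) / hnorm2 HW w) - ln (hnorm2 HV (\<rho>V \<sigma> *v v) / hnorm2 HV v)"

end

theory Submission
  imports Defs
begin


lemma norm_le_l1_c: "norm (x::complex^'v) \<le> (\<Sum>i\<in>UNIV. norm (x$i))"
  unfolding norm_vec_def by (rule L2_set_le_sum) auto

lemma herm_form_scaleR: "herm_form H (r *\<^sub>R x) (r *\<^sub>R x) = of_real (r^2) * herm_form H x x"
  unfolding herm_form_def
  apply (simp only: vector_scaleR_component)
  by (simp add: sum_distrib_left scaleR_conv_of_real power2_eq_square algebra_simps)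

lemma hnorm2_scaleR: "hnorm2 H (r *\<^sub>R x) = r^2 * hnorm2 H x"
  unfolding hnorm2_def herm_form_scaleR by simp

lemma hnorm2_upper: "\<exists>C\<ge>0. \<forall>x. hnorm2 H x \<le> C * (norm x)^2"
proof -
  define C where "C = (\<Sum>i\<in>UNIV. \<Sum>j\<in>UNIV. norm (H$i$j))"
  have "hnorm2 H x \<le> C * (norm x)^2" for x
  proof -
    have "hnorm2 H x \<le> norm (herm_form H x x)" unfolding hnorm2_def by (rule complex_Re_le_cmod)
    also have "\<dots> \<le> (\<Sum>i\<in>UNIV. \<Sum>j\<in>UNIV. norm (cnj (x $ i) * H $ i $ j * x $ j))"
      unfolding herm_form_def by (intro order.trans[OF norm_sum] sum_mono norm_sum)
    also have "\<dots> \<le> (\<Sum>i\<in>UNIV. \<Sum>j\<in>UNIV. norm (H$i$j) * (norm x)^2)"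
    proof (intro sum_mono)
      fix i j
      have "norm (cnj (x $ i) * H $ i $ j * x $ j) = norm (x$i) * norm (H$i$j) * norm (x$j)"
        by (simp add: norm_mult)
      also have "\<dots> \<le> norm x * norm (H$i$j) * norm x"
        by (intro mult_mono) (auto intro: Finite_Cartesian_Product.norm_nth_le)
      finally show "norm (cnj (x $ i) * H $ i $ j * x $ j) \<le> norm (H$i$j) * (norm x)^2"
        by (simp add: power2_eq_square algebra_simps)
    qed
    also have "\<dots> = C * (norm x)^2" unfolding C_def by (simp add: sum_distrib_right)
    finally show ?thesis .
  qed
  moreover have "C \<ge> 0" unfolding C_def by (intro sum_nonneg) auto
  ultimately show ?thesis by blast
qed

lemma hnorm2_cont: "continuous_on S (hnorm2 H)"
  unfolding hnorm2_def herm_form_def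
  by (intro continuous_intros)

lemma hnorm2_lower:
  assumes "hermitian_pd H"
  shows "\<exists>c>0. \<forall>x. c * (norm x)^2 \<le> hnorm2 H x"
proof -
  have cpt: "compact (sphere (0::complex^'v) 1)" by simp
  have ne: "sphere (0::complex^'v) 1 \<noteq> {}"
    using vector_choose_size[of 1] by auto
  obtain y where y: "y \<in> sphere 0 1" and ymin: "\<And>z. z \<in> sphere 0 1 \<Longrightarrow> hnorm2 H y \<le> hnorm2 H z"
    using continuous_attains_inf[OF cpt ne hnorm2_cont] by blast
  have "y \<noteq> 0" using y by auto
  hence pos: "hnorm2 H y > 0" using assms unfolding hermitian_pd_def hnorm2_def by auto
  have "hnorm2 H y * (norm x)^2 \<le> hnorm2 H x" for x
  proof (cases "x = 0")
    case True then show ?thesis by (simp add: hnorm2_def herm_form_def)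
  next
    case False
    define z where "z = (1 / norm x) *\<^sub>R x"
    have "z \<in> sphere 0 1" using False by (simp add: z_def)
    hence "hnorm2 H y \<le> hnorm2 H z" by (rule ymin)
    moreover have "x = norm x *\<^sub>R z" using False by (simp add: z_def)
    hence "hnorm2 H x = (norm x)^2 * hnorm2 H z" using hnorm2_scaleR by metis
    ultimately show ?thesis
      using mult_right_mono[of "hnorm2 H y" "hnorm2 H z" "(norm x)^2"] by (simp add: mult.commute)
  qed
  thus ?thesis using pos by blast
qed


lemma rep_expand:
  assumes "rational_rep \<rho>"
  shows "\<exists>S u. finite S \<and> (\<forall>\<sigma>\<in>torus. \<forall>i. (\<rho> \<sigma> *v v) $ i = (\<Sum>\<alpha>\<in>S. lmono \<sigma> \<alpha> * u \<alpha> $ i))"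
proof -
  have "\<forall>i j. \<exists>S c. finite S \<and> (\<forall>\<sigma>\<in>torus. \<rho> \<sigma> $ i $ j = (\<Sum>\<alpha>\<in>S. c \<alpha> * lmono \<sigma> \<alpha>))"
    using assms unfolding rational_rep_def regular_on_torus_def by blast
  then obtain SS cc where SS: "\<And>i j. finite (SS i j)"
    and cc: "\<And>i j \<sigma>. \<sigma> \<in> torus \<Longrightarrow> \<rho> \<sigma> $ i $ j = (\<Sum>\<alpha>\<in>SS i j. cc i j \<alpha> * lmono \<sigma> \<alpha>)"
    by metis
  define S where "S = (\<Union>i. \<Union>j. SS i j)"
  have finS: "finite S" unfolding S_def using SS by auto
  define u where "u \<alpha> = (\<chi> i. \<Sum>l\<in>UNIV. (if \<alpha> \<in> SS i l then cc i l \<alpha> else 0) * v $ l)" for \<alpha>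
  have "(\<rho> \<sigma> *v v) $ i = (\<Sum>\<alpha>\<in>S. lmono \<sigma> \<alpha> * u \<alpha> $ i)" if "\<sigma> \<in> torus" for \<sigma> i
  proof -
    have sub: "SS i l = S \<inter> SS i l" for l unfolding S_def by blast
    have "(\<rho> \<sigma> *v v) $ i = (\<Sum>l\<in>UNIV. \<rho> \<sigma> $ i $ l * v $ l)"
      by (simp add: matrix_vector_mult_def)
    also have "\<dots> = (\<Sum>l\<in>UNIV. (\<Sum>\<alpha>\<in>S. (if \<alpha> \<in> SS i l then cc i l \<alpha> else 0) * lmono \<sigma> \<alpha>) * v $ l)"
    proof (rule sum.cong[OF refl])
      fix l
      have "(\<Sum>\<alpha>\<in>SS i l. cc i l \<alpha> * lmono \<sigma> \<alpha>) = (\<Sum>\<alpha>\<in>S \<inter> SS i l. cc i l \<alpha> * lmono \<sigma> \<alpha>)"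
        using sub[of l] by simp
      also have "\<dots> = (\<Sum>\<alpha>\<in>S. (if \<alpha> \<in> SS i l then cc i l \<alpha> else 0) * lmono \<sigma> \<alpha>)"
        by (subst sum.inter_restrict[OF finS]) (auto intro: sum.cong)
      finally show "\<rho> \<sigma> $ i $ l * v $ l = (\<Sum>\<alpha>\<in>S. (if \<alpha> \<in> SS i l then cc i l \<alpha> else 0) * lmono \<sigma> \<alpha>) * v $ l"
        using cc[OF that, of i l] by simp
    qed
    also have "\<dots> = (\<Sum>\<alpha>\<in>S. lmono \<sigma> \<alpha> * u \<alpha> $ i)"
      unfolding u_def by (simp add: sum_distrib_right sum_distrib_left algebra_simps sum.swap[of _ UNIV S])
    finally show ?thesis .
  qed
  with finS show ?thesis by blast
qed

definition ee :: "nat \<Rightarrow> nat \<Rightarrow> complex" where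
  "ee M i = exp (2 * of_real pi * \<i> * of_nat i / of_nat M)"

lemma ee_nz: "ee M i \<noteq> 0" by (simp add: ee_def)

lemma norm_ee_powi: "norm (ee M i powi n) = 1"
  by (simp add: ee_def norm_power_int)

lemma char_sum:
  fixes n :: int
  assumes M: "M > 0" and n: "\<bar>n\<bar> < int M"
  shows "(\<Sum>i<M. ee M i powi n) = (if n = 0 then of_nat M else 0)"
proof (cases "n = 0")
  case True then show ?thesis by simp
next
  case False
  define q where "q = exp (2 * of_real pi * \<i> * of_int n / of_nat M)"
  have eq: "ee M i powi n = q ^ i" for i
  proof -
    have "ee M i powi n = exp (of_int n * (2 * of_real pi * \<i> * of_nat i / of_nat M))"
      unfolding ee_def by (rule exp_power_int)
    also have "\<dots> = exp (of_nat i * (2 * of_real pi * \<i> * of_int n / of_nat M))"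
      by (simp add: algebra_simps)
    also have "\<dots> = q ^ i" unfolding q_def by (rule exp_of_nat_mult)
    finally show ?thesis .
  qed
  have q1: "q \<noteq> 1"
  proof
    assume "q = 1"
    then obtain k :: int where k: "Im (2 * of_real pi * \<i> * of_int n / of_nat M) = of_int (2 * k) * pi"
      unfolding q_def exp_eq_1 by blast
    have "2 * pi * real_of_int n / real M = 2 * real_of_int k * pi" using k by simp
    hence "real_of_int n = real M * real_of_int k" using M by (simp add: field_simps)
    hence nk: "n = int M * k" by (metis of_int_eq_iff of_int_mult of_int_of_nat_eq)
    have "k \<noteq> 0" using False nk by auto
    hence "\<bar>k\<bar> \<ge> 1" by linarith
    hence "\<bar>n\<bar> \<ge> int M" unfolding nk abs_mult using M by (simp add: mult_le_cancel_left1)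
    with n show False by simp
  qed
  have qM: "q ^ M = 1"
  proof -
    have "q ^ M = exp (of_nat M * (2 * of_real pi * \<i> * of_int n / of_nat M))"
      unfolding q_def by (rule exp_of_nat_mult[symmetric])
    also have "\<dots> = exp (2 * of_real pi * \<i> * of_int n)" using M by simp
    also have "\<dots> = 1" unfolding exp_eq_1 by simp
    finally show ?thesis .
  qed
  have "(\<Sum>i<M. ee M i powi n) = (\<Sum>i<M. q ^ i)" by (simp add: eq)
  also have "\<dots> = 0" using geometric_sum[OF q1, of M] qM by simp
  finally show ?thesis using False by simp
qed

definition zeta :: "nat \<Rightarrow> ('n \<Rightarrow> nat) \<Rightarrow> complex^'n" where
  "zeta M j = (\<chi> k. ee M (j k))"

lemma zeta_torus: "zeta M j \<in> torus"
  by (simp add: zeta_def torus_def ee_nz)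

lemma norm_lmono_zeta: "norm (lmono (zeta M j) \<alpha>) = 1"
  by (simp add: lmono_def zeta_def prod_norm[symmetric] norm_ee_powi)

lemma char_sum_multi:
  fixes \<alpha> \<beta> :: "'n::finite \<Rightarrow> int"
  assumes M: "M > 0" and b: "\<And>k. \<bar>\<beta> k - \<alpha> k\<bar> < int M"
  shows "(\<Sum>j\<in>PiE UNIV (\<lambda>_. {..<M}). lmono (zeta M j) \<beta> * lmono (zeta M j) (-\<alpha>))
         = (if \<beta> = \<alpha> then of_nat M ^ CARD('n) else 0)"
proof -
  have "(\<Sum>j\<in>PiE UNIV (\<lambda>_. {..<M}). lmono (zeta M j) \<beta> * lmono (zeta M j) (-\<alpha>))
      = (\<Sum>j\<in>PiE UNIV (\<lambda>_. {..<M}). \<Prod>k\<in>UNIV. ee M (j k) powi (\<beta> k - \<alpha> k))"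
  proof (rule sum.cong[OF refl])
    fix j :: "'n \<Rightarrow> nat"
    show "lmono (zeta M j) \<beta> * lmono (zeta M j) (-\<alpha>) = (\<Prod>k\<in>UNIV. ee M (j k) powi (\<beta> k - \<alpha> k))"
      unfolding lmono_def zeta_def prod.distrib[symmetric]
      by (intro prod.cong refl) (simp add: power_int_add[symmetric] ee_nz)
  qed
  also have "\<dots> = (\<Prod>k\<in>UNIV. \<Sum>i<M. ee M i powi (\<beta> k - \<alpha> k))"
    by (rule prod_sum_PiE[symmetric]) auto
  also have "\<dots> = (\<Prod>k\<in>UNIV. if \<beta> k - \<alpha> k = 0 then of_nat M else 0)"
    using char_sum[OF M b] by simp
  also have "\<dots> = (if \<beta> = \<alpha> then of_nat M ^ CARD('n) else 0)"
  proof (cases "\<beta> = \<alpha>")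
    case True then show ?thesis by simp
  next
    case False
    then obtain k where "\<beta> k \<noteq> \<alpha> k" by auto
    then show ?thesis using False by (intro trans[OF prod_zero]) auto
  qed
  finally show ?thesis .
qed


lemma lmono_tmul: "lmono (tmul a b) \<beta> = lmono a \<beta> * lmono b \<beta>"
  unfolding lmono_def tmul_def by (simp add: power_int_mult_distrib prod.distrib)

lemma tmul_torus: "a \<in> torus \<Longrightarrow> b \<in> torus \<Longrightarrow> tmul a b \<in> torus"
  unfolding torus_def tmul_def by simp

lemma mv_comp_bound:
  fixes A :: "complex^'v^'v"
  shows "norm ((A *v y) $ i) \<le> (\<Sum>i\<in>UNIV. \<Sum>l\<in>UNIV. norm (A$i$l)) * norm y"
proof -
  have "norm ((A *v y) $ i) = norm (\<Sum>l\<in>UNIV. A$i$l * y$l)" by (simp add: matrix_vector_mult_def)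
  also have "\<dots> \<le> (\<Sum>l\<in>UNIV. norm (A$i$l) * norm y)"
    by (intro order.trans[OF norm_sum] sum_mono)
       (simp add: norm_mult mult_left_mono Finite_Cartesian_Product.norm_nth_le)
  also have "\<dots> = (\<Sum>l\<in>UNIV. norm (A$i$l)) * norm y" by (simp add: sum_distrib_right)
  also have "\<dots> \<le> (\<Sum>i\<in>UNIV. \<Sum>l\<in>UNIV. norm (A$i$l)) * norm y"
    by (intro mult_right_mono member_le_sum) (auto intro: sum_nonneg)
  finally show ?thesis .
qed

lemma lower_coef:
  fixes \<rho> :: "complex^'n \<Rightarrow> complex^'v^'v"
  assumes rr: "rational_rep \<rho>" and finS: "finite S"
    and ex: "\<And>\<sigma> i. \<sigma> \<in> torus \<Longrightarrow> (\<rho> \<sigma> *v v) $ i = (\<Sum>\<alpha>\<in>S. lmono \<sigma> \<alpha> * u \<alpha> $ i)"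
  shows "\<exists>K\<ge>0. \<forall>\<sigma>\<in>torus. \<forall>\<alpha>\<in>S. norm (lmono \<sigma> \<alpha>) * norm (u \<alpha>) \<le> K * norm (\<rho> \<sigma> *v v)"
proof -
  define M where "M = Suc (\<Sum>\<alpha>\<in>S. \<Sum>\<beta>\<in>S. \<Sum>k\<in>UNIV. nat \<bar>\<beta> k - \<alpha> k\<bar>)"
  have M0: "M > 0" unfolding M_def by simp
  have Mb: "\<bar>\<beta> k - \<alpha> k\<bar> < int M" if "\<alpha> \<in> S" "\<beta> \<in> S" for \<alpha> \<beta> k
  proof -
    have "nat \<bar>\<beta> k - \<alpha> k\<bar> \<le> (\<Sum>k\<in>UNIV. nat \<bar>\<beta> k - \<alpha> k\<bar>)"
      by (rule member_le_sum) auto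
    also have "\<dots> \<le> (\<Sum>\<beta>\<in>S. \<Sum>k\<in>UNIV. nat \<bar>\<beta> k - \<alpha> k\<bar>)"
      by (rule member_le_sum[OF that(2) _ finS, where f="\<lambda>\<beta>. \<Sum>k\<in>UNIV. nat \<bar>\<beta> k - \<alpha> k\<bar>"]) auto
    also have "\<dots> \<le> (\<Sum>\<alpha>\<in>S. \<Sum>\<beta>\<in>S. \<Sum>k\<in>UNIV. nat \<bar>\<beta> k - \<alpha> k\<bar>)"
      by (rule member_le_sum[OF that(1) _ finS, where f="\<lambda>\<alpha>. \<Sum>\<beta>\<in>S. \<Sum>k\<in>UNIV. nat \<bar>\<beta> k - \<alpha> k\<bar>"]) auto
    finally have "nat \<bar>\<beta> k - \<alpha> k\<bar> < M" unfolding M_def by simp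
    thus ?thesis by linarith
  qed
  define J where "J = PiE (UNIV::'n set) (\<lambda>_. {..<M})"
  have finJ: "finite J" unfolding J_def by (simp add: finite_PiE)
  define K0 where "K0 = (\<Sum>j\<in>J. \<Sum>i\<in>UNIV. \<Sum>l\<in>UNIV. norm (\<rho> (zeta M j) $ i $ l))"
  have K0: "K0 \<ge> 0" unfolding K0_def by (intro sum_nonneg) auto
  define N where "N = CARD('n)"
  define K where "K = real CARD('v) * K0 / real M ^ N"
  have Kpos: "K \<ge> 0" unfolding K_def using K0 by simp
  have main: "norm (lmono \<sigma> \<alpha>) * norm (u \<alpha>) \<le> K * norm (\<rho> \<sigma> *v v)"
    if \<sigma>: "\<sigma> \<in> torus" and \<alpha>: "\<alpha> \<in> S" for \<sigma> \<alpha>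
  proof -
    define y where "y = \<rho> \<sigma> *v v"
    have comp: "real M ^ N * (norm (lmono \<sigma> \<alpha>) * norm (u \<alpha> $ i)) \<le> K0 * norm y" for i
    proof -
      have ident: "of_nat M ^ N * lmono \<sigma> \<alpha> * u \<alpha> $ i
          = (\<Sum>j\<in>J. lmono (zeta M j) (-\<alpha>) * (\<rho> (tmul (zeta M j) \<sigma>) *v v) $ i)"
      proof -
        have "(\<Sum>j\<in>J. lmono (zeta M j) (-\<alpha>) * (\<rho> (tmul (zeta M j) \<sigma>) *v v) $ i)
            = (\<Sum>j\<in>J. \<Sum>\<beta>\<in>S. (lmono (zeta M j) \<beta> * lmono (zeta M j) (-\<alpha>)) * (lmono \<sigma> \<beta> * u \<beta> $ i))"
          by (intro sum.cong refl)
             (simp add: ex[OF tmul_torus[OF zeta_torus \<sigma>]] lmono_tmul sum_distrib_left algebra_simps)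
        also have "\<dots> = (\<Sum>\<beta>\<in>S. (\<Sum>j\<in>J. lmono (zeta M j) \<beta> * lmono (zeta M j) (-\<alpha>)) * (lmono \<sigma> \<beta> * u \<beta> $ i))"
          by (simp add: sum.swap[of _ J S] sum_distrib_right)
        also have "\<dots> = (\<Sum>\<beta>\<in>S. (if \<beta> = \<alpha> then of_nat M ^ N else 0) * (lmono \<sigma> \<beta> * u \<beta> $ i))"
        proof (rule sum.cong[OF refl])
          fix \<beta> assume "\<beta> \<in> S"
          have "(\<Sum>j\<in>J. lmono (zeta M j) \<beta> * lmono (zeta M j) (-\<alpha>)) = (if \<beta> = \<alpha> then of_nat M ^ N else 0)"
            unfolding J_def N_def by (rule char_sum_multi[OF M0 Mb[OF \<alpha> \<open>\<beta> \<in> S\<close>]])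
          thus "(\<Sum>j\<in>J. lmono (zeta M j) \<beta> * lmono (zeta M j) (-\<alpha>)) * (lmono \<sigma> \<beta> * u \<beta> $ i) =
            (if \<beta> = \<alpha> then of_nat M ^ N else 0) * (lmono \<sigma> \<beta> * u \<beta> $ i)" by simp
        qed
        also have "\<dots> = of_nat M ^ N * lmono \<sigma> \<alpha> * u \<alpha> $ i"
          using \<alpha> finS
          by (subst sum.cong[OF refl, where h="\<lambda>\<beta>. if \<beta> = \<alpha> then of_nat M ^ N * (lmono \<sigma> \<beta> * u \<beta> $ i) else 0"])
             (auto simp: sum.delta)
        finally show ?thesis by simp
      qed
      have "real M ^ N * (norm (lmono \<sigma> \<alpha>) * norm (u \<alpha> $ i)) = norm (of_nat M ^ N * lmono \<sigma> \<alpha> * u \<alpha> $ i)"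
        by (simp add: norm_mult norm_power)
      also have "\<dots> \<le> (\<Sum>j\<in>J. norm (lmono (zeta M j) (-\<alpha>) * (\<rho> (tmul (zeta M j) \<sigma>) *v v) $ i))"
        unfolding ident by (rule norm_sum)
      also have "\<dots> \<le> (\<Sum>j\<in>J. (\<Sum>i\<in>UNIV. \<Sum>l\<in>UNIV. norm (\<rho> (zeta M j) $ i $ l)) * norm y)"
      proof (rule sum_mono)
        fix j
        have "\<rho> (tmul (zeta M j) \<sigma>) = \<rho> (zeta M j) ** \<rho> \<sigma>"
          using rr zeta_torus \<sigma> unfolding rational_rep_def by blast
        hence "(\<rho> (tmul (zeta M j) \<sigma>) *v v) = \<rho> (zeta M j) *v y"
          by (simp add: y_def matrix_vector_mul_assoc)
        thus "norm (lmono (zeta M j) (-\<alpha>) * (\<rho> (tmul (zeta M j) \<sigma>) *v v) $ i)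
              \<le> (\<Sum>i\<in>UNIV. \<Sum>l\<in>UNIV. norm (\<rho> (zeta M j) $ i $ l)) * norm y"
          by (simp add: norm_mult norm_lmono_zeta mv_comp_bound)
      qed
      also have "\<dots> = K0 * norm y" unfolding K0_def by (simp add: sum_distrib_right)
      finally show ?thesis .
    qed
    have "real M ^ N * (norm (lmono \<sigma> \<alpha>) * norm (u \<alpha>))
        \<le> real M ^ N * (norm (lmono \<sigma> \<alpha>) * (\<Sum>i\<in>UNIV. norm (u \<alpha> $ i)))"
      by (intro mult_left_mono norm_le_l1_c) auto
    also have "\<dots> = (\<Sum>i\<in>UNIV. real M ^ N * (norm (lmono \<sigma> \<alpha>) * norm (u \<alpha> $ i)))"
      by (simp add: sum_distrib_left)
    also have "\<dots> \<le> (\<Sum>i\<in>(UNIV::'v set). K0 * norm y)"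
      by (rule sum_mono) (rule comp)
    also have "\<dots> = real CARD('v) * K0 * norm y" by simp
    finally have "real M ^ N * (norm (lmono \<sigma> \<alpha>) * norm (u \<alpha>)) \<le> real CARD('v) * K0 * norm y" .
    moreover have "real M ^ N > 0" using M0 by simp
    ultimately show ?thesis unfolding K_def y_def by (simp add: field_simps)
  qed
  show ?thesis using Kpos main by blast
qed


lemma rep_bounds:
  fixes \<rho> :: "complex^'n \<Rightarrow> complex^'v^'v"
  assumes rr: "rational_rep \<rho>" and H: "hermitian_pd H" and v: "v \<noteq> 0"
  shows "\<exists>A D E. finite A \<and> A \<noteq> {} \<and> D > 0 \<and> E > 0 \<and>
     (\<forall>\<sigma>\<in>torus. (\<forall>\<alpha>\<in>A. norm (lmono \<sigma> \<alpha>)^2 \<le> D * hnorm2 H (\<rho> \<sigma> *v v)) \<and>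
        hnorm2 H (\<rho> \<sigma> *v v) \<le> E * (\<Sum>\<alpha>\<in>A. norm (lmono \<sigma> \<alpha>)^2))"
proof -
  obtain S u where finS: "finite S"
    and ex: "\<And>\<sigma> i. \<sigma> \<in> torus \<Longrightarrow> (\<rho> \<sigma> *v v) $ i = (\<Sum>\<alpha>\<in>S. lmono \<sigma> \<alpha> * u \<alpha> $ i)"
    using rep_expand[OF rr, of v] by blast
  define A where "A = {\<alpha>\<in>S. u \<alpha> \<noteq> 0}"
  have finA: "finite A" using finS unfolding A_def by simp
  have tone: "tone \<in> torus" by (simp add: tone_def torus_def)
  have Ane: "A \<noteq> {}"
  proof
    assume "A = {}"
    hence "\<forall>\<alpha>\<in>S. u \<alpha> = 0" unfolding A_def by auto
    hence "(\<rho> tone *v v) $ i = 0" for i using ex[OF tone, of i] by simp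
    moreover have "\<rho> tone *v v = v" using rr unfolding rational_rep_def by simp
    ultimately show False using v by (simp add: vec_eq_iff)
  qed
  obtain K where K: "K \<ge> 0" and Kb: "\<And>\<sigma> \<alpha>. \<sigma> \<in> torus \<Longrightarrow> \<alpha> \<in> S \<Longrightarrow>
      norm (lmono \<sigma> \<alpha>) * norm (u \<alpha>) \<le> K * norm (\<rho> \<sigma> *v v)"
    using lower_coef[OF rr finS ex] by blast
  obtain c where c: "c > 0" and cb: "\<And>x. c * (norm x)^2 \<le> hnorm2 H x"
    using hnorm2_lower[OF H] by blast
  obtain C where C: "C \<ge> 0" and Cb: "\<And>x. hnorm2 H x \<le> C * (norm x)^2"
    using hnorm2_upper by blast
  define m where "m = Min (norm ` u ` A)"
  have m: "m > 0" unfolding m_def using finA Ane by (subst Min_gr_iff) (auto simp: A_def)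
  have mle: "m \<le> norm (u \<alpha>)" if "\<alpha> \<in> A" for \<alpha> unfolding m_def using finA that by simp
  define D where "D = (K^2 + 1) / (c * m^2)"
  have D: "D > 0" unfolding D_def using c m by (intro divide_pos_pos) (auto intro: add_nonneg_pos)
  define U where "U = (\<Sum>\<alpha>\<in>S. \<Sum>i\<in>UNIV. norm (u \<alpha> $ i))"
  define E where "E = C * U^2 * real (card A) + 1"
  have E: "E > 0" unfolding E_def using C by (intro add_nonneg_pos) auto
  have lower: "norm (lmono \<sigma> \<alpha>)^2 \<le> D * hnorm2 H (\<rho> \<sigma> *v v)" if "\<sigma> \<in> torus" "\<alpha> \<in> A" for \<sigma> \<alpha>
  proof -
    define y where "y = \<rho> \<sigma> *v v"
    have "norm (lmono \<sigma> \<alpha>) * m \<le> norm (lmono \<sigma> \<alpha>) * norm (u \<alpha>)"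
      by (intro mult_left_mono mle that) auto
    also have "\<dots> \<le> K * norm y" unfolding y_def using Kb that by (auto simp: A_def)
    finally have 1: "norm (lmono \<sigma> \<alpha>) * m \<le> K * norm y" .
    have "(norm (lmono \<sigma> \<alpha>) * m)^2 \<le> (K * norm y)^2"
      using 1 m by (intro power_mono) auto
    also have "\<dots> \<le> (K^2 + 1) * (norm y)^2" by (simp add: power_mult_distrib mult_right_mono)
    also have "\<dots> \<le> (K^2 + 1) * (hnorm2 H y / c)"
      using cb[of y] c by (intro mult_left_mono) (auto simp: field_simps)
    finally have "norm (lmono \<sigma> \<alpha>)^2 * m^2 \<le> (K^2 + 1) * (hnorm2 H y / c)"
      by (simp add: power_mult_distrib)
    thus ?thesis unfolding D_def y_def using m c by (simp add: field_simps)
  qed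
  have upper: "hnorm2 H (\<rho> \<sigma> *v v) \<le> E * (\<Sum>\<alpha>\<in>A. norm (lmono \<sigma> \<alpha>)^2)" if \<sigma>: "\<sigma> \<in> torus" for \<sigma>
  proof -
    define y where "y = \<rho> \<sigma> *v v"
    have "norm y \<le> (\<Sum>i\<in>UNIV. norm (y $ i))" by (rule norm_le_l1_c)
    also have "\<dots> \<le> (\<Sum>i\<in>UNIV. \<Sum>\<alpha>\<in>S. norm (lmono \<sigma> \<alpha>) * norm (u \<alpha> $ i))"
      unfolding y_def ex[OF \<sigma>] by (intro sum_mono order.trans[OF norm_sum]) (simp add: norm_mult)
    also have "\<dots> = (\<Sum>\<alpha>\<in>S. norm (lmono \<sigma> \<alpha>) * (\<Sum>i\<in>UNIV. norm (u \<alpha> $ i)))"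
      by (simp add: sum.swap[of _ UNIV S] sum_distrib_left)
    also have "\<dots> = (\<Sum>\<alpha>\<in>A. norm (lmono \<sigma> \<alpha>) * (\<Sum>i\<in>UNIV. norm (u \<alpha> $ i)))"
      unfolding A_def using finS by (intro sum.mono_neutral_right) auto
    also have "\<dots> \<le> (\<Sum>\<alpha>\<in>A. norm (lmono \<sigma> \<alpha>) * U)"
    proof (intro sum_mono mult_left_mono)
      fix \<alpha> assume "\<alpha> \<in> A"
      hence "\<alpha> \<in> S" unfolding A_def by auto
      thus "(\<Sum>i\<in>UNIV. norm (u \<alpha> $ i)) \<le> U" unfolding U_def
        by (rule member_le_sum[OF _ _ finS, where f="\<lambda>\<alpha>. \<Sum>i\<in>UNIV. norm (u \<alpha> $ i)"]) (auto intro: sum_nonneg)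
    qed auto
    also have "\<dots> = U * (\<Sum>\<alpha>\<in>A. norm (lmono \<sigma> \<alpha>))" by (simp add: sum_distrib_left mult.commute)
    finally have ny: "norm y \<le> U * (\<Sum>\<alpha>\<in>A. norm (lmono \<sigma> \<alpha>))" .
    have U0: "U \<ge> 0" unfolding U_def by (intro sum_nonneg) auto
    have "hnorm2 H y \<le> C * (norm y)^2" by (rule Cb)
    also have "\<dots> \<le> C * (U * (\<Sum>\<alpha>\<in>A. norm (lmono \<sigma> \<alpha>)))^2"
      using ny C by (intro mult_left_mono power_mono) auto
    also have "\<dots> = C * U^2 * (\<Sum>\<alpha>\<in>A. norm (lmono \<sigma> \<alpha>))^2" by (simp add: power_mult_distrib)
    also have "\<dots> \<le> C * U^2 * ((\<Sum>\<alpha>\<in>A. norm (lmono \<sigma> \<alpha>)^2) * real (card A))"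
      using C by (intro mult_left_mono sum_squared_le_sum_of_squares) auto
    also have "\<dots> \<le> E * (\<Sum>\<alpha>\<in>A. norm (lmono \<sigma> \<alpha>)^2)"
    proof -
      have s0: "(\<Sum>\<alpha>\<in>A. norm (lmono \<sigma> \<alpha>)^2) \<ge> 0" by (intro sum_nonneg) auto
      show ?thesis unfolding E_def using s0 by (simp add: algebra_simps)
    qed
    finally show ?thesis unfolding y_def .
  qed
  show ?thesis using finA Ane D E lower upper by blast
qed


lemma lmono_norm_exp:
  assumes "\<sigma> \<in> torus"
  shows "norm (lmono \<sigma> \<gamma>) = exp (\<Sum>k\<in>UNIV. of_int (\<gamma> k) * ln (norm (\<sigma> $ k)))"
proof -
  have "norm (lmono \<sigma> \<gamma>) = (\<Prod>k\<in>UNIV. norm (\<sigma> $ k) powi \<gamma> k)"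
    unfolding lmono_def by (simp add: prod_norm[symmetric] norm_power_int)
  also have "\<dots> = (\<Prod>k\<in>UNIV. exp (of_int (\<gamma> k) * ln (norm (\<sigma> $ k))))"
  proof (intro prod.cong refl)
    fix k
    have "norm (\<sigma> $ k) > 0" using assms by (simp add: torus_def)
    hence "norm (\<sigma> $ k) = exp (ln (norm (\<sigma> $ k)))" by simp
    hence "norm (\<sigma> $ k) powi \<gamma> k = exp (ln (norm (\<sigma> $ k))) powi \<gamma> k" by simp
    also have "\<dots> = exp (of_int (\<gamma> k) * ln (norm (\<sigma> $ k)))" by (rule exp_power_int)
    finally show "norm (\<sigma> $ k) powi \<gamma> k = exp (of_int (\<gamma> k) * ln (norm (\<sigma> $ k)))" .
  qed
  also have "\<dots> = exp (\<Sum>k\<in>UNIV. of_int (\<gamma> k) * ln (norm (\<sigma> $ k)))"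
    by (simp add: exp_sum)
  finally show ?thesis .
qed

lemma lmono_nz: "\<sigma> \<in> torus \<Longrightarrow> norm (lmono \<sigma> \<gamma>) > 0"
  by (simp add: lmono_norm_exp)

lemma floor_mult_bound:
  fixes g y f :: real
  assumes "y - 1 \<le> f" "f \<le> y"
  shows "g * f \<ge> g * y - \<bar>g\<bar>"
proof (cases "g \<ge> 0")
  case True
  hence "g * f \<ge> g * (y - 1)" using assms by (intro mult_left_mono) auto
  thus ?thesis using True by (simp add: algebra_simps)
next
  case False
  hence "g * f \<ge> g * y" using assms by (intro mult_left_mono_neg) auto
  thus ?thesis by simp
qed

lemma rounding:
  fixes x :: "'n::finite \<Rightarrow> real" and a :: "'n \<Rightarrow> int" and B :: "('n \<Rightarrow> int) set"
  assumes finB: "finite B"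
    and lt: "\<And>\<beta>. \<beta> \<in> B \<Longrightarrow> (\<Sum>k\<in>UNIV. of_int (\<beta> k) * x k) < (\<Sum>k\<in>UNIV. of_int (a k) * x k)"
  shows "\<exists>d::'n \<Rightarrow> int. \<forall>\<beta>\<in>B. (\<Sum>k\<in>UNIV. \<beta> k * d k) + 1 \<le> (\<Sum>k\<in>UNIV. a k * d k)"
proof (cases "B = {}")
  case True then show ?thesis by simp
next
  case False
  define lin where "lin \<beta> = (\<Sum>k\<in>UNIV. of_int (\<beta> k) * x k)" for \<beta> :: "'n \<Rightarrow> int"
  define \<delta> where "\<delta> = Min ((\<lambda>\<beta>. lin a - lin \<beta>) ` B)"
  have \<delta>: "\<delta> > 0" unfolding \<delta>_def using finB False lt by (subst Min_gr_iff) (auto simp: lin_def)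
  have \<delta>le: "\<delta> \<le> lin a - lin \<beta>" if "\<beta> \<in> B" for \<beta> unfolding \<delta>_def using finB that by simp
  define R where "R = (\<Sum>\<beta>\<in>B. \<Sum>k\<in>UNIV. \<bar>real_of_int (a k - \<beta> k)\<bar>)"
  define K where "K = real (nat \<lceil>R / \<delta>\<rceil> + 1)"
  have "K > R / \<delta>" unfolding K_def by linarith
  hence KR: "K * \<delta> > R" using \<delta> by (simp add: field_simps)
  define d where "d k = \<lfloor>K * x k\<rfloor>" for k
  have "(\<Sum>k\<in>UNIV. \<beta> k * d k) + 1 \<le> (\<Sum>k\<in>UNIV. a k * d k)" if \<beta>: "\<beta> \<in> B" for \<beta>
  proof -
    have "real_of_int (\<Sum>k\<in>UNIV. (a k - \<beta> k) * d k) = (\<Sum>k\<in>UNIV. real_of_int (a k - \<beta> k) * real_of_int (d k))"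
      by simp
    also have "\<dots> \<ge> (\<Sum>k\<in>UNIV. real_of_int (a k - \<beta> k) * (K * x k) - \<bar>real_of_int (a k - \<beta> k)\<bar>)"
      by (intro sum_mono floor_mult_bound) (auto simp: d_def)
    also have "(\<Sum>k\<in>UNIV. real_of_int (a k - \<beta> k) * (K * x k) - \<bar>real_of_int (a k - \<beta> k)\<bar>)
       = K * (lin a - lin \<beta>) - (\<Sum>k\<in>UNIV. \<bar>real_of_int (a k - \<beta> k)\<bar>)"
    proof -
      have "(\<Sum>k\<in>UNIV. real_of_int (a k - \<beta> k) * (K * x k)) = K * (\<Sum>k\<in>UNIV. real_of_int (a k - \<beta> k) * x k)"
        by (simp add: sum_distrib_left algebra_simps)
      also have "(\<Sum>k\<in>UNIV. real_of_int (a k - \<beta> k) * x k) = lin a - lin \<beta>"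
        unfolding lin_def by (simp add: sum_subtractf[symmetric] left_diff_distrib)
      finally show ?thesis by (simp add: sum_subtractf)
    qed
    finally have 1: "real_of_int (\<Sum>k\<in>UNIV. (a k - \<beta> k) * d k) \<ge>
       K * (lin a - lin \<beta>) - (\<Sum>k\<in>UNIV. \<bar>real_of_int (a k - \<beta> k)\<bar>)" .
    have "(\<Sum>k\<in>UNIV. \<bar>real_of_int (a k - \<beta> k)\<bar>) \<le> R"
      unfolding R_def by (rule member_le_sum[OF \<beta> _ finB, where f="\<lambda>\<beta>. \<Sum>k\<in>UNIV. \<bar>real_of_int (a k - \<beta> k)\<bar>"]) auto
    moreover have "K * (lin a - lin \<beta>) \<ge> K * \<delta>" using \<delta>le[OF \<beta>] by (intro mult_left_mono) (auto simp: K_def)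
    ultimately have "real_of_int (\<Sum>k\<in>UNIV. (a k - \<beta> k) * d k) > 0" using 1 KR by linarith
    hence "(\<Sum>k\<in>UNIV. (a k - \<beta> k) * d k) \<ge> 1" by linarith
    thus ?thesis by (simp add: sum_subtractf left_diff_distrib)
  qed
  thus ?thesis by blast
qed


lemma ln_norm_powi: "t \<noteq> 0 \<Longrightarrow> ln (norm ((t::complex) powi m)) = of_int m * ln (norm t)"
proof -
  assume t: "t \<noteq> 0"
  have "norm (t powi m) = exp (ln (norm t)) powi m" using t by (simp add: norm_power_int)
  also have "\<dots> = exp (of_int m * ln (norm t))" by (rule exp_power_int)
  finally show ?thesis by simp
qed

theorem mainTheorem16:
  fixes \<rho>V :: "complex^'n \<Rightarrow> complex^'v^'v" and \<rho>W :: "complex^'n \<Rightarrow> complex^'w^'w"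
    and HV :: "complex^'v^'v" and HW :: "complex^'w^'w"
    and v :: "complex^'v" and w :: "complex^'w"
  assumes "rational_rep \<rho>V" and "rational_rep \<rho>W"
    and "hermitian_pd HV" and "hermitian_pd HW"
    and "v \<noteq> 0" and "w \<noteq> 0"
  shows "(\<exists>\<sigma> :: nat \<Rightarrow> complex^'n. (\<forall>j. \<sigma> j \<in> torus) \<and>
            filterlim (\<lambda>j. pwv \<rho>W HW w \<rho>V HV v (\<sigma> j)) at_bot sequentially)
     \<longleftrightarrow> (\<exists>lam :: complex \<Rightarrow> complex^'n. alg_1ps lam \<and>
            filterlim (\<lambda>t. pwv \<rho>W HW w \<rho>V HV v (lam t)) at_bot (at 0))"
proof -
  obtain AV DV EV where finAV: "finite AV" and AVne: "AV \<noteq> {}" and DV: "DV > 0" and EV: "EV > 0"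
    and lowV: "\<And>\<sigma> \<alpha>. \<sigma> \<in> torus \<Longrightarrow> \<alpha> \<in> AV \<Longrightarrow> norm (lmono \<sigma> \<alpha>)^2 \<le> DV * hnorm2 HV (\<rho>V \<sigma> *v v)"
    and upV: "\<And>\<sigma>. \<sigma> \<in> torus \<Longrightarrow> hnorm2 HV (\<rho>V \<sigma> *v v) \<le> EV * (\<Sum>\<alpha>\<in>AV. norm (lmono \<sigma> \<alpha>)^2)"
    using rep_bounds[OF assms(1) assms(3) assms(5)] by blast
  obtain AW DW EW where finAW: "finite AW" and AWne: "AW \<noteq> {}" and DW: "DW > 0" and EW: "EW > 0"
    and lowW: "\<And>\<sigma> \<alpha>. \<sigma> \<in> torus \<Longrightarrow> \<alpha> \<in> AW \<Longrightarrow> norm (lmono \<sigma> \<alpha>)^2 \<le> DW * hnorm2 HW (\<rho>W \<sigma> *v w)"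
    and upW: "\<And>\<sigma>. \<sigma> \<in> torus \<Longrightarrow> hnorm2 HW (\<rho>W \<sigma> *v w) \<le> EW * (\<Sum>\<alpha>\<in>AW. norm (lmono \<sigma> \<alpha>)^2)"
    using rep_bounds[OF assms(2) assms(4) assms(6)] by blast
  define hV where "hV \<sigma> = hnorm2 HV (\<rho>V \<sigma> *v v)" for \<sigma>
  define hW where "hW \<sigma> = hnorm2 HW (\<rho>W \<sigma> *v w)" for \<sigma>
  define p where "p = pwv \<rho>W HW w \<rho>V HV v"
  have hV0: "hnorm2 HV v > 0" using assms(3,5) unfolding hermitian_pd_def hnorm2_def by blast
  have hW0: "hnorm2 HW w > 0" using assms(4,6) unfolding hermitian_pd_def hnorm2_def by blast
  have hVpos: "hV \<sigma> > 0" if "\<sigma> \<in> torus" for \<sigma>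
  proof -
    obtain \<alpha> where "\<alpha> \<in> AV" using AVne by blast
    have "0 < norm (lmono \<sigma> \<alpha>)^2" using lmono_nz[OF that] by simp
    also have "\<dots> \<le> DV * hV \<sigma>" unfolding hV_def by (rule lowV[OF that \<open>\<alpha> \<in> AV\<close>])
    finally show ?thesis using DV by (simp add: zero_less_mult_iff)
  qed
  have hWpos: "hW \<sigma> > 0" if "\<sigma> \<in> torus" for \<sigma>
  proof -
    obtain \<alpha> where "\<alpha> \<in> AW" using AWne by blast
    have "0 < norm (lmono \<sigma> \<alpha>)^2" using lmono_nz[OF that] by simp
    also have "\<dots> \<le> DW * hW \<sigma>" unfolding hW_def by (rule lowW[OF that \<open>\<alpha> \<in> AW\<close>])
    finally show ?thesis using DW by (simp add: zero_less_mult_iff)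
  qed
  have pform: "p \<sigma> = ln (hW \<sigma>) - ln (hnorm2 HW w) - ln (hV \<sigma>) + ln (hnorm2 HV v)"
    if "\<sigma> \<in> torus" for \<sigma>
    using hVpos[OF that] hWpos[OF that] hV0 hW0
    by (simp add: p_def pwv_def hV_def[symmetric] hW_def[symmetric] ln_div)
  show ?thesis unfolding p_def[symmetric]
  proof
    assume "\<exists>\<sigma>. (\<forall>j. \<sigma> j \<in> torus) \<and> filterlim (\<lambda>j. p (\<sigma> j)) at_bot sequentially"
    then obtain s where s: "\<And>j. s j \<in> torus" and slim: "filterlim (\<lambda>j. p (s j)) at_bot sequentially"
      by blast
    have key: "\<exists>\<sigma>\<in>torus. \<exists>\<alpha>0\<in>AV. \<forall>\<beta>\<in>AW. norm (lmono \<sigma> \<beta>) < norm (lmono \<sigma> \<alpha>0)"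
    proof (rule ccontr)
      assume "\<not> ?thesis"
      hence dom: "\<And>\<sigma> \<alpha>. \<sigma> \<in> torus \<Longrightarrow> \<alpha> \<in> AV \<Longrightarrow> \<exists>\<beta>\<in>AW. norm (lmono \<sigma> \<alpha>) \<le> norm (lmono \<sigma> \<beta>)"
        by (meson not_less)
      define B where "B = EV * real (card AV) * DW"
      have B: "B > 0" unfolding B_def using EV DW AVne finAV by (simp add: card_gt_0_iff)
      define L where "L = ln (hnorm2 HV v) - ln (hnorm2 HW w) - ln B"
      have pL: "p \<sigma> \<ge> L" if \<sigma>: "\<sigma> \<in> torus" for \<sigma>
      proof -
        have "hV \<sigma> \<le> EV * (\<Sum>\<alpha>\<in>AV. norm (lmono \<sigma> \<alpha>)^2)" unfolding hV_def by (rule upV[OF \<sigma>])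
        also have "\<dots> \<le> EV * (\<Sum>\<alpha>\<in>AV. DW * hW \<sigma>)"
        proof (intro mult_left_mono sum_mono)
          fix \<alpha> assume "\<alpha> \<in> AV"
          then obtain \<beta> where \<beta>: "\<beta> \<in> AW" and le: "norm (lmono \<sigma> \<alpha>) \<le> norm (lmono \<sigma> \<beta>)"
            using dom[OF \<sigma>] by blast
          have "norm (lmono \<sigma> \<alpha>)^2 \<le> norm (lmono \<sigma> \<beta>)^2" using le by (intro power_mono) auto
          also have "\<dots> \<le> DW * hW \<sigma>" unfolding hW_def by (rule lowW[OF \<sigma> \<beta>])
          finally show "norm (lmono \<sigma> \<alpha>)^2 \<le> DW * hW \<sigma>" .
        qed (use EV in auto)
        also have "\<dots> = B * hW \<sigma>" unfolding B_def by simp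
        finally have "hV \<sigma> \<le> B * hW \<sigma>" .
        hence "ln (hV \<sigma>) \<le> ln (B * hW \<sigma>)" using hVpos[OF \<sigma>] by simp
        also have "\<dots> = ln B + ln (hW \<sigma>)" using B hWpos[OF \<sigma>] by (simp add: ln_mult)
        finally show ?thesis unfolding pform[OF \<sigma>] L_def by simp
      qed
      have "eventually (\<lambda>j. p (s j) \<le> L - 1) sequentially"
        using slim unfolding filterlim_at_bot by blast
      then obtain j where "p (s j) \<le> L - 1" unfolding eventually_sequentially by blast
      with pL[OF s, of j] show False by linarith
    qed
    then obtain \<sigma> \<alpha>0 where \<sigma>: "\<sigma> \<in> torus" and \<alpha>0: "\<alpha>0 \<in> AV"
      and dom: "\<And>\<beta>. \<beta> \<in> AW \<Longrightarrow> norm (lmono \<sigma> \<beta>) < norm (lmono \<sigma> \<alpha>0)" by blast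
    define x where "x k = ln (norm (\<sigma> $ k))" for k
    have "\<exists>d::'n \<Rightarrow> int. \<forall>\<beta>\<in>AW. (\<Sum>k\<in>UNIV. \<beta> k * d k) + 1 \<le> (\<Sum>k\<in>UNIV. \<alpha>0 k * d k)"
    proof (rule rounding[OF finAW])
      fix \<beta> assume "\<beta> \<in> AW"
      from dom[OF this] show "(\<Sum>k\<in>UNIV. of_int (\<beta> k) * x k) < (\<Sum>k\<in>UNIV. of_int (\<alpha>0 k) * x k)"
        unfolding lmono_norm_exp[OF \<sigma>] x_def by simp
    qed
    then obtain d :: "'n \<Rightarrow> int" where d: "\<And>\<beta>. \<beta> \<in> AW \<Longrightarrow> (\<Sum>k\<in>UNIV. \<beta> k * d k) + 1 \<le> (\<Sum>k\<in>UNIV. \<alpha>0 k * d k)"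
      by blast
    define e where "e \<gamma> = (\<Sum>k\<in>UNIV. \<gamma> k * d k)" for \<gamma> :: "'n \<Rightarrow> int"
    define lam where "lam t = (\<chi> k. (t::complex) powi (- d k))" for t
    have lamT: "lam t \<in> torus" if "t \<noteq> 0" for t using that by (simp add: lam_def torus_def)
    have alg: "alg_1ps lam"
      unfolding alg_1ps_def
    proof (intro conjI allI impI)
      show "lam t \<in> torus" if "t \<noteq> 0" for t by (rule lamT[OF that])
      show "lam (s * t) = tmul (lam s) (lam t)" for s t
        by (simp add: lam_def tmul_def power_int_mult_distrib vec_eq_iff)
      show "\<exists>S c. finite S \<and> (\<forall>t. t \<noteq> 0 \<longrightarrow> lam t $ k = (\<Sum>m\<in>S. c m * t powi m))" for k
        by (rule exI[of _ "{- d k}"], rule exI[of _ "\<lambda>_. 1"]) (simp add: lam_def)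
    qed
    have lmlam: "norm (lmono (lam t) \<gamma>) = exp (- of_int (e \<gamma>) * ln (norm t))" if t: "t \<noteq> 0" for t \<gamma>
    proof -
      have "norm (lmono (lam t) \<gamma>) = exp (\<Sum>k\<in>UNIV. of_int (\<gamma> k) * ln (norm (lam t $ k)))"
        by (rule lmono_norm_exp[OF lamT[OF t]])
      also have "(\<Sum>k\<in>UNIV. of_int (\<gamma> k) * ln (norm (lam t $ k))) = - of_int (e \<gamma>) * ln (norm t)"
        using t by (simp add: lam_def ln_norm_powi e_def sum_negf sum_distrib_right mult.assoc)
      finally show ?thesis .
    qed
    define a where "a = e \<alpha>0"
    define Cst where "Cst = ln (EW * real (card AW)) - ln (hnorm2 HW w) + ln DV + ln (hnorm2 HV v)"
    have cAW: "real (card AW) > 0" using finAW AWne by (simp add: card_gt_0_iff)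
    have pbound: "p (lam t) \<le> Cst + 2 * ln (norm t)" if t0: "t \<noteq> 0" and t1: "norm t < 1" for t
    proof -
      define l where "l = ln (norm t)"
      have l: "l < 0" unfolding l_def using t0 t1 by simp
      have T: "lam t \<in> torus" by (rule lamT[OF t0])
      have "hW (lam t) \<le> EW * (\<Sum>\<beta>\<in>AW. norm (lmono (lam t) \<beta>)^2)" unfolding hW_def by (rule upW[OF T])
      also have "\<dots> \<le> EW * (\<Sum>\<beta>\<in>AW. exp (- of_int (a - 1) * l)^2)"
      proof (intro mult_left_mono sum_mono power_mono)
        fix \<beta> assume "\<beta> \<in> AW"
        hence "e \<beta> \<le> a - 1" using d unfolding e_def a_def by fastforce
        hence "real_of_int (e \<beta>) \<le> real_of_int (a - 1)" by linarith
        hence "- of_int (e \<beta>) * l \<le> - of_int (a - 1) * l" using l by (intro mult_right_mono_neg) auto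
        thus "norm (lmono (lam t) \<beta>) \<le> exp (- of_int (a - 1) * l)" unfolding lmlam[OF t0] l_def by simp
      qed (use EW in auto)
      also have "\<dots> = EW * real (card AW) * exp (- of_int (a - 1) * l)^2" by simp
      finally have hWb: "hW (lam t) \<le> EW * real (card AW) * exp (- of_int (a - 1) * l)^2" .
      have "ln (hW (lam t)) \<le> ln (EW * real (card AW) * exp (- of_int (a - 1) * l)^2)"
        using hWb hWpos[OF T] by simp
      also have "\<dots> = ln (EW * real (card AW)) + 2 * (- of_int (a - 1) * l)"
        using EW cAW by (simp add: ln_mult ln_realpow)
      finally have lW: "ln (hW (lam t)) \<le> ln (EW * real (card AW)) + 2 * (- of_int (a - 1) * l)" .
      have "exp (- of_int a * l)^2 \<le> DV * hV (lam t)"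
        using lowV[OF T \<alpha>0] unfolding hV_def lmlam[OF t0] a_def l_def .
      hence "ln (exp (- of_int a * l)^2) \<le> ln (DV * hV (lam t))"
        using DV hVpos[OF T] by (subst ln_le_cancel_iff) auto
      hence "2 * (- of_int a * l) \<le> ln DV + ln (hV (lam t))"
        using DV hVpos[OF T] by (simp add: ln_mult ln_realpow)
      with lW show ?thesis unfolding pform[OF T] Cst_def l_def by (simp add: algebra_simps)
    qed
    have "filterlim (\<lambda>t. p (lam t)) at_bot (at 0)"
      unfolding filterlim_at_bot
    proof
      fix Z :: real
      define r where "r = min 1 (exp ((Z - Cst) / 2))"
      have r: "r > 0" unfolding r_def by simp
      show "eventually (\<lambda>t. p (lam t) \<le> Z) (at 0)"
        unfolding eventually_at
      proof (intro exI[of _ r] conjI r ballI impI)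
        fix t :: complex assume "t \<in> UNIV" and h: "t \<noteq> 0 \<and> dist t 0 < r"
        hence t0: "t \<noteq> 0" and tr: "norm t < r" by auto
        have t1: "norm t < 1" using tr unfolding r_def by simp
        have "norm t < exp ((Z - Cst) / 2)" using tr unfolding r_def by simp
        hence "ln (norm t) < ln (exp ((Z - Cst) / 2))" using t0 by (subst ln_less_cancel_iff) auto
        hence "ln (norm t) < (Z - Cst) / 2" by simp
        thus "p (lam t) \<le> Z" using pbound[OF t0 t1] by simp
      qed
    qed
    thus "\<exists>lam. alg_1ps lam \<and> filterlim (\<lambda>t. p (lam t)) at_bot (at 0)" using alg by blast
  next
    assume "\<exists>lam. alg_1ps lam \<and> filterlim (\<lambda>t. p (lam t)) at_bot (at 0)"
    then obtain lam where alg: "alg_1ps lam" and lim: "filterlim (\<lambda>t. p (lam t)) at_bot (at 0)" by blast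
    define f where "f j = complex_of_real (inverse (real (Suc j)))" for j
    have fnz: "f j \<noteq> 0" for j unfolding f_def by (simp del: of_nat_Suc)
    have f: "filterlim f (at 0) sequentially"
    proof (rule filterlim_atI)
      show "(f \<longlongrightarrow> 0) sequentially"
        unfolding f_def using tendsto_of_real[OF LIMSEQ_inverse_real_of_nat, where 'a=complex] by simp
      show "eventually (\<lambda>j. f j \<noteq> 0) sequentially" using fnz by simp
    qed
    have "filterlim (\<lambda>j. p (lam (f j))) at_bot sequentially"
      using filterlim_compose[OF lim f] by simp
    moreover have "\<forall>j. lam (f j) \<in> torus" using alg fnz unfolding alg_1ps_def by blast
    ultimately show "\<exists>\<sigma>. (\<forall>j. \<sigma> j \<in> torus) \<and> filterlim (\<lambda>j. p (\<sigma> j)) at_bot sequentially"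
      by (intro exI[of _ "\<lambda>j. lam (f j)"]) simp
  qed
qed

end
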